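(* Let $(A,\triangleright,\triangleleft,\alpha)$ be a Hom-$L$-dendriform algebra. Define $x\triangleright^t y:=x\triangleright y$ and $x\triangleleft^t y:=-y\triangleleft x$. Then $(A,\triangleright^t,\triangleleft^t,\alpha)$ is a Hom-$L$-dendriform algebra. Moreover, writing $x\cdot y=x\triangleright y+x\triangleleft y$, $x\ast y=x\triangleright y-y\triangleleft x$ and $\cdot^t,\ast^t$ for the analogous operations built from $\triangleright^t,\triangleleft^t$, one has $\cdot^t=\ast$ and $\ast^t=\cdot$.
   Context: A Hom-$L$-dendriform algebra is a vector space $A$ with bilinear maps $\triangleleft,\triangleright:A\otimes A\to A$ and a linear map $\alpha:A\to A$ such that for all $x,y,z\in A$: $\alpha(x)\triangleright(y\triangleright z)=(x\triangleright y)\triangleright\alpha(z)+(x\triangleleft y)\triangleright\alpha(z)+\alpha(y)\triangleright(x\triangleright z)-(y\triangleleft x)\triangleright\alpha(z)-(y\triangleright x)\triangleright\alpha(z)$ and $\alpha(x)\triangleright(y\triangleleft z)=(x\triangleright y)\triangleleft\alpha(z)+\alpha(y)\triangleleft(x\triangleright z)+\alpha(y)\triangleleft(x\triangleleft z)-(y\triangleleft x)\triangleleft\alpha(z)$. *)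

theory Defs
  imports Main "HOL.Vector_Spaces"
begin

text \<open>A vector space A over a field 'k is given by a scalar multiplication
  scale :: 'k \<Rightarrow> 'a \<Rightarrow> 'a satisfying the vector_space axioms (HOL Vector_Spaces).
  r = right operation (triangleright), l = left operation (triangleleft).\<close>

definition bilinear_map :: "('k::field \<Rightarrow> 'a::ab_group_add \<Rightarrow> 'a) \<Rightarrow> ('a \<Rightarrow> 'a \<Rightarrow> 'a) \<Rightarrow> bool" where
  "bilinear_map scale m \<longleftrightarrow>
     (\<forall>x. Vector_Spaces.linear scale scale (\<lambda>y. m x y)) \<and>
     (\<forall>y. Vector_Spaces.linear scale scale (\<lambda>x. m x y))"

definition hom_L_dendriform ::
  "('k::field \<Rightarrow> 'a::ab_group_add \<Rightarrow> 'a) \<Rightarrow> ('a \<Rightarrow> 'a \<Rightarrow> 'a) \<Rightarrow> ('a \<Rightarrow> 'a \<Rightarrow> 'a) \<Rightarrow> ('a \<Rightarrow> 'a) \<Rightarrow> bool" where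
  "hom_L_dendriform scale r l \<alpha> \<longleftrightarrow>
     vector_space scale \<and> bilinear_map scale r \<and> bilinear_map scale l \<and>
     Vector_Spaces.linear scale scale \<alpha> \<and>
     (\<forall>x y z. r (\<alpha> x) (r y z) =
        r (r x y) (\<alpha> z) + r (l x y) (\<alpha> z) + r (\<alpha> y) (r x z)
        - r (l y x) (\<alpha> z) - r (r y x) (\<alpha> z)) \<and>
     (\<forall>x y z. r (\<alpha> x) (l y z) =
        l (r x y) (\<alpha> z) + l (\<alpha> y) (r x z) + l (\<alpha> y) (l x z)
        - l (l y x) (\<alpha> z))"

definition dot_op :: "('a::ab_group_add \<Rightarrow> 'a \<Rightarrow> 'a) \<Rightarrow> ('a \<Rightarrow> 'a \<Rightarrow> 'a) \<Rightarrow> 'a \<Rightarrow> 'a \<Rightarrow> 'a" where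
  "dot_op r l x y = r x y + l x y"

definition star_op :: "('a::ab_group_add \<Rightarrow> 'a \<Rightarrow> 'a) \<Rightarrow> ('a \<Rightarrow> 'a \<Rightarrow> 'a) \<Rightarrow> 'a \<Rightarrow> 'a \<Rightarrow> 'a" where
  "star_op r l x y = r x y - l y x"

definition right_t :: "('a \<Rightarrow> 'a \<Rightarrow> 'a) \<Rightarrow> 'a \<Rightarrow> 'a \<Rightarrow> 'a" where
  "right_t r x y = r x y"

definition left_t :: "('a::ab_group_add \<Rightarrow> 'a \<Rightarrow> 'a) \<Rightarrow> 'a \<Rightarrow> 'a \<Rightarrow> 'a" where
  "left_t l x y = - l y x"

end

theory Submission
  imports Defs
begin

lemma add_neg:
  fixes f :: "'a::ab_group_add \<Rightarrow> 'b::ab_group_add"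
  assumes "\<forall>x y. f (x + y) = f x + f y"
  shows "f (- x) = - f x"
proof -
  have "f 0 = f 0 + f 0" using assms by (metis add_0)
  hence z: "f 0 = 0" by simp
  have "f (x + - x) = f x + f (- x)" using assms by blast
  thus ?thesis using z by (simp add: eq_neg_iff_add_eq_0 add.commute)
qed

lemma lin_neg:
  assumes "Vector_Spaces.linear s s f"
  shows "f (- x) = - f x"
  using assms by (intro add_neg) (simp add: linear_iff)

lemma lin_neg_comp:
  assumes "Vector_Spaces.linear s s f"
  shows "Vector_Spaces.linear s s (\<lambda>x. - f x)"
  using assms unfolding linear_iff
proof (intro conjI allI; (elim conjE)?)
  fix c x
  assume a: "\<forall>c x. f (s c x) = s c (f x)" and v: "vector_space s"
  have "\<forall>x y. s c (x + y) = s c x + s c y"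
    using v unfolding vector_space_def module_def by blast
  then have "s c (- f x) = - s c (f x)" by (rule add_neg)
  then show "- f (s c x) = s c (- f x)" using a by simp
qed auto

theorem mainTheorem13:
  fixes scale :: "'k::field \<Rightarrow> 'a::ab_group_add \<Rightarrow> 'a"
    and r l :: "'a \<Rightarrow> 'a \<Rightarrow> 'a" and \<alpha> :: "'a \<Rightarrow> 'a"
  assumes "hom_L_dendriform scale r l \<alpha>"
  shows "hom_L_dendriform scale (right_t r) (left_t l) \<alpha>
         \<and> dot_op (right_t r) (left_t l) = star_op r l
         \<and> star_op (right_t r) (left_t l) = dot_op r l"
proof -
  note H = assms[unfolded hom_L_dendriform_def bilinear_map_def]
  have vs: "vector_space scale" and r1: "\<And>x. Vector_Spaces.linear scale scale (r x)"
    and r2: "\<And>y. Vector_Spaces.linear scale scale (\<lambda>x. r x y)"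
    and l1: "\<And>x. Vector_Spaces.linear scale scale (l x)"
    and l2: "\<And>y. Vector_Spaces.linear scale scale (\<lambda>x. l x y)"
    and la: "Vector_Spaces.linear scale scale \<alpha>" using H unfolding atomize_all by (elim conjE; blast)+
  have rn: "\<And>a b. r (- a) b = - r a b" using lin_neg[OF r2] by simp
  have rn2: "\<And>a b. r a (- b) = - r a b" using lin_neg[OF r1] by simp
  have ln1: "\<And>a b. l (- a) b = - l a b" using lin_neg[OF l2] by simp
  have ln2: "\<And>a b. l a (- b) = - l a b" using lin_neg[OF l1] by simp
  have bl: "bilinear_map scale (left_t l)"
    unfolding bilinear_map_def left_t_def using r1 r2 l1 l2 lin_neg_comp by blast
  have br: "bilinear_map scale (right_t r)"
    unfolding right_t_def using r1 r2 by (simp add: bilinear_map_def)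
  have i1: "\<forall>x y z. r (\<alpha> x) (r y z) =
        r (r x y) (\<alpha> z) + r (l x y) (\<alpha> z) + r (\<alpha> y) (r x z)
        - r (l y x) (\<alpha> z) - r (r y x) (\<alpha> z)" using H by (elim conjE; blast)
  have i2: "\<forall>x y z. r (\<alpha> x) (l y z) =
        l (r x y) (\<alpha> z) + l (\<alpha> y) (r x z) + l (\<alpha> y) (l x z)
        - l (l y x) (\<alpha> z)" using H by (elim conjE; blast)
  have j1: "\<forall>x y z. r (\<alpha> x) (r y z) =
        r (r x y) (\<alpha> z) + r (- l y x) (\<alpha> z) + r (\<alpha> y) (r x z)
        - r (- l x y) (\<alpha> z) - r (r y x) (\<alpha> z)"
  proof (intro allI)
    fix x y z show "r (\<alpha> x) (r y z) =
        r (r x y) (\<alpha> z) + r (- l y x) (\<alpha> z) + r (\<alpha> y) (r x z)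
        - r (- l x y) (\<alpha> z) - r (r y x) (\<alpha> z)"
      using i1[rule_format, of x y z] by (simp add: rn algebra_simps)
  qed
  have j2: "\<forall>x y z. r (\<alpha> x) (- l z y) =
        - l (\<alpha> z) (r x y) + - l (r x z) (\<alpha> y) + - l (- l z x) (\<alpha> y)
        - - l (\<alpha> z) (- l x y)"
  proof (intro allI)
    fix x y z show "r (\<alpha> x) (- l z y) =
        - l (\<alpha> z) (r x y) + - l (r x z) (\<alpha> y) + - l (- l z x) (\<alpha> y)
        - - l (\<alpha> z) (- l x y)"
    proof -
      have e: "r (\<alpha> x) (l z y) =
        l (r x z) (\<alpha> y) + l (\<alpha> z) (r x y) + l (\<alpha> z) (l x y)
        - l (l z x) (\<alpha> y)" using i2 by blast
      show ?thesis unfolding rn2 ln1 ln2 minus_minus e by (simp add: algebra_simps)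
    qed
  qed
  have k2: "\<forall>x y z. right_t r (\<alpha> x) (left_t l y z) =
        left_t l (right_t r x y) (\<alpha> z) + left_t l (\<alpha> y) (right_t r x z) + left_t l (\<alpha> y) (left_t l x z)
        - left_t l (left_t l y x) (\<alpha> z)"
    unfolding right_t_def left_t_def using j2 unfolding ln2 by blast
  have k1: "\<forall>x y z. right_t r (\<alpha> x) (right_t r y z) =
        right_t r (right_t r x y) (\<alpha> z) + right_t r (left_t l x y) (\<alpha> z) + right_t r (\<alpha> y) (right_t r x z)
        - right_t r (left_t l y x) (\<alpha> z) - right_t r (right_t r y x) (\<alpha> z)"
    unfolding right_t_def left_t_def using j1 by blast
  have h: "hom_L_dendriform scale (right_t r) (left_t l) \<alpha>"
    unfolding hom_L_dendriform_def using vs la bl br k1 k2 by blast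
  have d: "dot_op (right_t r) (left_t l) = star_op r l"
    by (simp add: fun_eq_iff dot_op_def star_op_def right_t_def left_t_def)
  have s: "star_op (right_t r) (left_t l) = dot_op r l"
    by (simp add: fun_eq_iff dot_op_def star_op_def right_t_def left_t_def)
  show ?thesis using h d s by blast
qed

end
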